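(* The bilinear form $\omega(X,Y)=\operatorname{tr}_c\big(X[D,Y]\big)$ is a continuous Lie algebra $2$-cocycle on $\mathfrak g$, i.e. it is skew-symmetric and satisfies $\omega(X,[Y,Z])+\omega(Y,[Z,X])+\omega(Z,[X,Y])=0$ for all $X,Y,Z\in\mathfrak g$. It defines a non-trivial central extension of $\mathfrak g$: there is no continuous linear functional $\theta\colon\mathfrak g\to\mathbb C$ with $\omega(X,Y)=\theta([X,Y])$ for all $X,Y\in\mathfrak g$.
   Context: Let $H$ be a complex separable Hilbert space with orthonormal basis $\{e_n\}_{n\in\mathbb Z}$, and let $D$ be the unbounded self-adjoint operator with $De_n=ne_n$. Let $\mathfrak g$ be the real Lie algebra of bounded skew-adjoint operators $X$ on $H$ such that $[D,X]$ is Hilbert--Schmidt. It is a Banach Lie algebra with norm $\|X\|=\sup_n|\langle e_n,Xe_n\rangle|+\|[D,X]\|_2$, where $\|\cdot\|_2$ is the Hilbert--Schmidt norm. The conditional trace is $\operatorname{tr}_c(T)=\sum_{n\in\mathbb Z}\langle e_n,Te_n\rangle$. For $X,Y\in\mathfrak g$ the series defining $\operatorname{tr}_c(X[D,Y])$ converges absolutely. *)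

theory Defs
  imports "HOL-Analysis.Analysis"
begin

text \<open>H = l2(Z), modelled as square-summable functions int => complex.
  Operators are maps (int => complex) => (int => complex); only their behaviour on l2 matters.
  The basis vector e_n is delta n, and D e_n = n e_n.\<close>

type_synonym vec = "int \<Rightarrow> complex"
type_synonym op = "vec \<Rightarrow> vec"

definition ell2 :: "vec set" where
  "ell2 = {x. (\<lambda>n. (cmod (x n))\<^sup>2) summable_on UNIV}"

definition l2norm :: "vec \<Rightarrow> real" where
  "l2norm x = sqrt (\<Sum>\<^sub>\<infinity>n. (cmod (x n))\<^sup>2)"

definition l2inner :: "vec \<Rightarrow> vec \<Rightarrow> complex" where
  "l2inner x y = (\<Sum>\<^sub>\<infinity>n. cnj (x n) * y n)"

definition delta :: "int \<Rightarrow> vec" where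
  "delta n = (\<lambda>m. if m = n then 1 else 0)"

definition entry :: "op \<Rightarrow> int \<Rightarrow> int \<Rightarrow> complex" where
  "entry T m n = T (delta n) m"

definition linear_on_l2 :: "op \<Rightarrow> bool" where
  "linear_on_l2 T \<longleftrightarrow>
     (\<forall>x\<in>ell2. \<forall>y\<in>ell2. T (\<lambda>m. x m + y m) = (\<lambda>m. T x m + T y m)) \<and>
     (\<forall>x\<in>ell2. \<forall>c::complex. T (\<lambda>m. c * x m) = (\<lambda>m. c * T x m))"

definition bounded_op :: "op \<Rightarrow> bool" where
  "bounded_op T \<longleftrightarrow> linear_on_l2 T \<and> (\<forall>x\<in>ell2. T x \<in> ell2) \<and>
     (\<exists>C. \<forall>x\<in>ell2. l2norm (T x) \<le> C * l2norm x)"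

definition skew_adjoint :: "op \<Rightarrow> bool" where
  "skew_adjoint T \<longleftrightarrow> (\<forall>x\<in>ell2. \<forall>y\<in>ell2. l2inner x (T y) = - l2inner (T x) y)"

text \<open>The commutator [D,T], given through its matrix entries (m - n) <e_m, T e_n>.\<close>
definition commD :: "op \<Rightarrow> op" where
  "commD T = (\<lambda>x m. \<Sum>\<^sub>\<infinity>n. of_int (m - n) * entry T m n * x n)"

definition hilbert_schmidt_entries :: "op \<Rightarrow> bool" where
  "hilbert_schmidt_entries T \<longleftrightarrow> (\<lambda>(m,n). (cmod (entry T m n))\<^sup>2) summable_on (UNIV :: (int \<times> int) set)"

definition hs_norm :: "op \<Rightarrow> real" where
  "hs_norm T = sqrt (\<Sum>\<^sub>\<infinity>(m,n)\<in>(UNIV :: (int \<times> int) set). (cmod (entry T m n))\<^sup>2)"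

definition gset :: "op set" where
  "gset = {X. bounded_op X \<and> skew_adjoint X \<and> hilbert_schmidt_entries (commD X)}"

definition gnorm :: "op \<Rightarrow> real" where
  "gnorm X = (SUP n. cmod (entry X n n)) + hs_norm (commD X)"

definition lie :: "op \<Rightarrow> op \<Rightarrow> op" where
  "lie X Y = (\<lambda>x m. X (Y x) m - Y (X x) m)"

definition op_add :: "op \<Rightarrow> op \<Rightarrow> op" where
  "op_add X Y = (\<lambda>x m. X x m + Y x m)"

definition op_scale :: "real \<Rightarrow> op \<Rightarrow> op" where
  "op_scale a X = (\<lambda>x m. complex_of_real a * X x m)"

definition trc :: "op \<Rightarrow> complex" where
  "trc T = (\<Sum>\<^sub>\<infinity>n. entry T n n)"

definition omega :: "op \<Rightarrow> op \<Rightarrow> complex" where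
  "omega X Y = trc (\<lambda>x. X (commD Y x))"

end

theory Submission
  imports Defs
begin


lemma infsum_single_pt:
  assumes "\<And>x. x \<noteq> a \<Longrightarrow> f x = 0"
  shows "infsum f UNIV = f a" and "f summable_on UNIV"
proof -
  have "infsum f UNIV = infsum f {a}"
    by (rule infsum_cong_neutral) (use assms in auto)
  then show "infsum f UNIV = f a" by simp
  have "f summable_on {a}" by simp
  then show "f summable_on UNIV"
    by (rule summable_on_cong_neutral[THEN iffD1, rotated -1]) (use assms in auto)
qed

lemma am_gm_summable:
  fixes f g :: "'a \<Rightarrow> real"
  assumes "(\<lambda>x. (f x)\<^sup>2) summable_on A" "(\<lambda>x. (g x)\<^sup>2) summable_on A"
  shows "(\<lambda>x. \<bar>f x * g x\<bar>) summable_on A"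
proof (rule summable_on_comparison_test)
  have "(\<lambda>x. (f x)\<^sup>2 + (g x)\<^sup>2) summable_on A" using summable_on_add[OF assms] .
  then have "(\<lambda>x. (1/2) * ((f x)\<^sup>2 + (g x)\<^sup>2)) summable_on A" by (rule summable_on_cmult_right)
  then show "(\<lambda>x. ((f x)\<^sup>2 + (g x)\<^sup>2) / 2) summable_on A"
    by (simp add: field_simps)
  fix x show "\<bar>f x * g x\<bar> \<le> ((f x)\<^sup>2 + (g x)\<^sup>2) / 2"
  proof -
    have "0 \<le> (\<bar>f x\<bar> - \<bar>g x\<bar>)\<^sup>2" by simp
    then show ?thesis by (simp add: power2_eq_square algebra_simps abs_mult)
  qed
qed auto

lemma cauchy_schwarz_infsum:
  fixes f g :: "'a \<Rightarrow> real"
  assumes f2: "(\<lambda>x. (f x)\<^sup>2) summable_on A" and g2: "(\<lambda>x. (g x)\<^sup>2) summable_on A"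
    and fn: "\<And>x. 0 \<le> f x" and gn: "\<And>x. 0 \<le> g x"
  shows "infsum (\<lambda>x. f x * g x) A \<le> sqrt (infsum (\<lambda>x. (f x)\<^sup>2) A) * sqrt (infsum (\<lambda>x. (g x)\<^sup>2) A)"
proof -
  define P where "P = infsum (\<lambda>x. (f x)\<^sup>2) A"
  define Q where "Q = infsum (\<lambda>x. (g x)\<^sup>2) A"
  have fg: "(\<lambda>x. f x * g x) summable_on A"
    using am_gm_summable[OF f2 g2] fn gn by (simp add: abs_mult)
  have P0: "P \<ge> 0" "Q \<ge> 0" unfolding P_def Q_def by (auto intro: infsum_nonneg)
  have key: "2 * infsum (\<lambda>x. f x * g x) A \<le> t * P + Q / t" if t: "t > 0" for t
  proof -
    have "infsum (\<lambda>x. 2 * (f x * g x)) A \<le> infsum (\<lambda>x. t * (f x)\<^sup>2 + (g x)\<^sup>2 / t) A"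
    proof (rule infsum_mono)
      show "(\<lambda>x. 2 * (f x * g x)) summable_on A" using fg by (rule summable_on_cmult_right)
      show "(\<lambda>x. t * (f x)\<^sup>2 + (g x)\<^sup>2 / t) summable_on A"
        using summable_on_add[OF summable_on_cmult_right[OF f2] summable_on_cmult_left[OF g2]]
        by (simp add: divide_inverse)
      fix x
      have "0 \<le> (t * f x - g x)\<^sup>2 / t" using t by simp
      also have "(t * f x - g x)\<^sup>2 / t = t * (f x)\<^sup>2 + (g x)\<^sup>2 / t - 2 * (f x * g x)"
        using t by (simp add: power2_eq_square field_simps)
      finally show "2 * (f x * g x) \<le> t * (f x)\<^sup>2 + (g x)\<^sup>2 / t" by simp
    qed
    also have "\<dots> = t * P + Q / t"
      unfolding P_def Q_def
      by (subst infsum_add) (auto intro!: summable_on_cmult_right summable_on_cmult_left f2 g2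
           simp: infsum_cmult_right[OF f2] infsum_cmult_left[OF g2] divide_inverse simp del: infsum_cmult_right)
    finally show ?thesis by (simp add: infsum_cmult_right[OF fg])
  qed
  show ?thesis
  proof (cases "P = 0 \<or> Q = 0")
    case True
    have "infsum (\<lambda>x. f x * g x) A \<le> 0"
    proof -
      { assume "P = 0"
        then have "(f x)\<^sup>2 = 0" if "x \<in> A" for x
          by (intro nonneg_infsum_le_0D[of "\<lambda>x. (f x)\<^sup>2" A]) (use f2 that in \<open>auto simp: P_def\<close>)
        then have "infsum (\<lambda>x. f x * g x) A = 0" by (intro infsum_0) auto }
      moreover
      { assume "Q = 0"
        then have "(g x)\<^sup>2 = 0" if "x \<in> A" for x
          by (intro nonneg_infsum_le_0D[of "\<lambda>x. (g x)\<^sup>2" A]) (use g2 that in \<open>auto simp: Q_def\<close>)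
        then have "infsum (\<lambda>x. f x * g x) A = 0" by (intro infsum_0) auto }
      ultimately show ?thesis using True by auto
    qed
    then show ?thesis using P0 unfolding P_def[symmetric] Q_def[symmetric]
      using mult_nonneg_nonneg[OF real_sqrt_ge_zero[OF P0(1)] real_sqrt_ge_zero[OF P0(2)]] by linarith
  next
    case False
    then have pos: "P > 0" "Q > 0" using P0 by auto
    define t where "t = sqrt Q / sqrt P"
    have "t > 0" using pos by (simp add: t_def)
    have "t * P + Q / t = 2 * (sqrt P * sqrt Q)"
    proof -
      have p: "sqrt P > 0" "sqrt Q > 0" using pos by simp_all
      have a: "P / sqrt P = sqrt P" "Q / sqrt Q = sqrt Q" using pos by (simp_all only: real_div_sqrt less_imp_le)
      have "t * P = sqrt Q * (P / sqrt P)" unfolding t_def by simp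
      then have 1: "t * P = sqrt Q * sqrt P" using a by simp
      have "Q / t = (Q / sqrt Q) * sqrt P" unfolding t_def by simp
      then have "Q / t = sqrt Q * sqrt P" using a by simp
      with 1 show ?thesis by simp
    qed
    then show ?thesis using key[OF \<open>t > 0\<close>] unfolding P_def Q_def by linarith
  qed
qed



lemma delta_ell2: "delta n \<in> ell2"
  unfolding ell2_def delta_def by (auto intro: infsum_single_pt(2)[of n])

lemma l2inner_delta: "l2inner (delta m) y = y m"
  unfolding l2inner_def delta_def by (subst infsum_single_pt(1)[of m]) auto

lemma l2inner_delta_right: "l2inner x (delta m) = cnj (x m)"
  unfolding l2inner_def delta_def by (subst infsum_single_pt(1)[of m]) auto

lemma l2norm_delta: "l2norm (delta m) = 1"
  unfolding l2norm_def delta_def by (subst infsum_single_pt(1)[of m]) auto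

lemma ell2_scale: "x \<in> ell2 \<Longrightarrow> (\<lambda>m. c * x m) \<in> ell2"
  unfolding ell2_def
  by (auto simp: norm_mult power_mult_distrib intro: summable_on_cmult_right)

lemma ell2_add: assumes "x \<in> ell2" "y \<in> ell2" shows "(\<lambda>m. x m + y m) \<in> ell2"
proof -
  have s: "(\<lambda>m. 2 * (cmod (x m))\<^sup>2 + 2 * (cmod (y m))\<^sup>2) summable_on UNIV"
    using assms unfolding ell2_def
    by (auto intro!: summable_on_add summable_on_cmult_right)
  have "(\<lambda>m. (cmod (x m + y m))\<^sup>2) summable_on UNIV"
  proof (rule summable_on_comparison_test[OF s])
    fix m
    have "cmod (x m + y m) \<le> cmod (x m) + cmod (y m)" by (rule norm_triangle_ineq)
    then have "(cmod (x m + y m))\<^sup>2 \<le> (cmod (x m) + cmod (y m))\<^sup>2"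
      by (simp add: power_mono)
    also have "\<dots> \<le> 2 * (cmod (x m))\<^sup>2 + 2 * (cmod (y m))\<^sup>2"
    proof -
      have "0 \<le> (cmod (x m) - cmod (y m))\<^sup>2" by simp
      then show ?thesis by (simp add: power2_eq_square algebra_simps)
    qed
    finally show "(cmod (x m + y m))\<^sup>2 \<le> 2 * (cmod (x m))\<^sup>2 + 2 * (cmod (y m))\<^sup>2" .
  qed auto
  then show ?thesis unfolding ell2_def by simp
qed

lemma sq_le_infsum:
  fixes f :: "'a \<Rightarrow> real"
  assumes "f summable_on UNIV" "\<And>x. 0 \<le> f x"
  shows "f m \<le> infsum f UNIV"
  using finite_sum_le_infsum[of f UNIV "{m}"] assms by auto

lemma ell2_prod_abs_summable:
  assumes "x \<in> ell2" "y \<in> ell2"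
  shows "(\<lambda>k. cmod (x k) * cmod (y k)) summable_on UNIV"
  using am_gm_summable[of "\<lambda>k. cmod (x k)" UNIV "\<lambda>k. cmod (y k)"] assms
  unfolding ell2_def by (simp add: abs_mult)

lemma ell2_prod_summable:
  assumes "x \<in> ell2" "y \<in> ell2"
  shows "(\<lambda>k. x k * y k) summable_on UNIV"
  by (rule summable_on_iff_abs_summable_on_complex[THEN iffD2])
     (use ell2_prod_abs_summable[OF assms] in \<open>simp add: norm_mult\<close>)

lemma entry_skew:
  assumes "skew_adjoint X"
  shows "entry X m n = - cnj (entry X n m)"
proof -
  have "entry X m n = l2inner (delta m) (X (delta n))"
    by (simp add: entry_def l2inner_delta)
  also have "\<dots> = - l2inner (X (delta m)) (delta n)"
    using assms delta_ell2 unfolding skew_adjoint_def by blast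
  also have "\<dots> = - cnj (entry X n m)"
    by (simp add: l2inner_delta_right entry_def)
  finally show ?thesis .
qed

lemma apply_expand:
  assumes "skew_adjoint X" "x \<in> ell2"
  shows "X x m = (\<Sum>\<^sub>\<infinity>k. entry X m k * x k)"
proof -
  have "X x m = l2inner (delta m) (X x)" by (simp add: l2inner_delta)
  also have "\<dots> = - l2inner (X (delta m)) x"
    using assms delta_ell2 unfolding skew_adjoint_def by blast
  also have "\<dots> = - (\<Sum>\<^sub>\<infinity>k. cnj (entry X k m) * x k)"
    by (simp add: l2inner_def entry_def)
  also have "\<dots> = (\<Sum>\<^sub>\<infinity>k. - (cnj (entry X k m) * x k))"
    by (simp add: infsum_uminus)
  also have "\<dots> = (\<Sum>\<^sub>\<infinity>k. entry X m k * x k)"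
    by (rule infsum_cong) (simp add: entry_skew[OF assms(1), of m])
  finally show ?thesis .
qed

lemma col_ell2:
  assumes "bounded_op X" shows "(\<lambda>m. entry X m n) \<in> ell2"
proof -
  have "X (delta n) \<in> ell2" using assms delta_ell2 unfolding bounded_op_def by blast
  then show ?thesis by (simp add: entry_def)
qed

lemma row_ell2:
  assumes "bounded_op X" "skew_adjoint X" shows "(\<lambda>k. entry X m k) \<in> ell2"
proof -
  have "(\<lambda>k. entry X k m) \<in> ell2" by (rule col_ell2[OF assms(1)])
  then show ?thesis unfolding ell2_def
    by (subst entry_skew[OF assms(2)]) simp
qed

lemma entry_bound:
  assumes "bounded_op X" shows "\<exists>K\<ge>0. \<forall>m n. cmod (entry X m n) \<le> K"
proof -
  obtain C where C: "\<And>x. x \<in> ell2 \<Longrightarrow> l2norm (X x) \<le> C * l2norm x"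
    using assms unfolding bounded_op_def by blast
  have "cmod (entry X m n) \<le> max C 0" for m n
  proof -
    have cs: "(\<lambda>m. (cmod (X (delta n) m))\<^sup>2) summable_on UNIV"
      using col_ell2[OF assms, of n] by (simp add: ell2_def entry_def)
    have "(cmod (entry X m n))\<^sup>2 \<le> (\<Sum>\<^sub>\<infinity>m. (cmod (X (delta n) m))\<^sup>2)"
      unfolding entry_def by (rule sq_le_infsum[OF cs]) simp
    then have "cmod (entry X m n) \<le> l2norm (X (delta n))"
      unfolding l2norm_def by (rule real_le_rsqrt)
    also have "\<dots> \<le> C" using C[OF delta_ell2, of n] by (simp add: l2norm_delta)
    finally show ?thesis by simp
  qed
  then show ?thesis by (intro exI[of _ "max C 0"]) auto
qed

definition dd :: "op \<Rightarrow> int \<Rightarrow> int \<Rightarrow> complex" where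
  "dd X m n = of_int (m - n) * entry X m n"

lemma commD_delta: "commD W (delta n) = (\<lambda>m. dd W m n)"
proof
  fix m
  show "commD W (delta n) m = dd W m n"
    unfolding commD_def dd_def delta_def
    by (subst infsum_single_pt(1)[of n]) auto
qed

lemma entry_commD: "entry (commD W) m n = dd W m n"
  by (simp add: entry_def commD_delta)

lemma dd_diag[simp]: "dd X n n = 0" by (simp add: dd_def)

lemma cmod_dd: "cmod (dd X m n) = \<bar>real_of_int (m - n)\<bar> * cmod (entry X m n)"
  unfolding dd_def by (simp only: norm_mult norm_of_int)

lemma offdiag_le: assumes "m \<noteq> n" shows "cmod (entry X m n) \<le> cmod (dd X m n)"
proof -
  have "1 \<le> \<bar>real_of_int (m - n)\<bar>" using assms by linarith
  then have "1 * cmod (entry X m n) \<le> \<bar>real_of_int (m - n)\<bar> * cmod (entry X m n)"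
    by (intro mult_right_mono) auto
  then show ?thesis by (simp add: cmod_dd)
qed

lemma dd_skew: "skew_adjoint X \<Longrightarrow> cmod (dd X m n) = cmod (dd X n m)"
  by (simp only: cmod_dd entry_skew[of X m n] norm_minus_cancel complex_mod_cnj) (simp add: abs_minus_commute)

lemma gset_D: "X \<in> gset \<Longrightarrow> bounded_op X \<and> skew_adjoint X"
  by (simp add: gset_def)

lemma HS: assumes "X \<in> gset" shows "(\<lambda>(m,n). (cmod (dd X m n))\<^sup>2) summable_on UNIV"
  using assms unfolding gset_def hilbert_schmidt_entries_def by (simp add: entry_commD)

lemma HS_swap: assumes "X \<in> gset" shows "(\<lambda>(m,n). (cmod (dd X n m))\<^sup>2) summable_on UNIV"
proof -
  have "(\<lambda>(x,y). (\<lambda>(m,n). (cmod (dd X m n))\<^sup>2) (y,x)) summable_on (UNIV \<times> UNIV)"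
    using summable_on_swap[of "\<lambda>(m,n). (cmod (dd X m n))\<^sup>2" UNIV UNIV, THEN iffD1] HS[OF assms]
    by (simp only: UNIV_Times_UNIV)
  then show ?thesis by (simp add: UNIV_Times_UNIV)
qed

lemma HS_row: assumes "X \<in> gset" shows "(\<lambda>n. (cmod (dd X m n))\<^sup>2) summable_on UNIV"
  using summable_on_SigmaD1[of "\<lambda>m n. (cmod (dd X m n))\<^sup>2" UNIV "\<lambda>_. UNIV" m] HS[OF assms]
  by (simp add: UNIV_Times_UNIV)

lemma HS_col: assumes "X \<in> gset" shows "(\<lambda>m. (cmod (dd X m n))\<^sup>2) summable_on UNIV"
  using summable_on_SigmaD1[of "\<lambda>n m. (cmod (dd X m n))\<^sup>2" UNIV "\<lambda>_. UNIV" n] HS_swap[OF assms]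
  by (simp add: UNIV_Times_UNIV)

lemma dd_col_ell2: "X \<in> gset \<Longrightarrow> (\<lambda>m. dd X m n) \<in> ell2"
  using HS_col unfolding ell2_def by blast
lemma dd_row_ell2: "X \<in> gset \<Longrightarrow> (\<lambda>n. dd X m n) \<in> ell2"
  using HS_row unfolding ell2_def by blast

lemma HS_rownorm: assumes "X \<in> gset" shows "(\<lambda>m. \<Sum>\<^sub>\<infinity>n. (cmod (dd X m n))\<^sup>2) summable_on UNIV"
  using summable_on_Sigma_banach[of "\<lambda>m n. (cmod (dd X m n))\<^sup>2" UNIV "\<lambda>_. UNIV"] HS[OF assms]
  by (simp add: UNIV_Times_UNIV)

lemma HS_colnorm: assumes "X \<in> gset" shows "(\<lambda>n. \<Sum>\<^sub>\<infinity>m. (cmod (dd X m n))\<^sup>2) summable_on UNIV"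
  using summable_on_Sigma_banach[of "\<lambda>n m. (cmod (dd X m n))\<^sup>2" UNIV "\<lambda>_. UNIV"] HS_swap[OF assms]
  by (simp add: UNIV_Times_UNIV)



lemma omega_def2: "omega X W = (\<Sum>\<^sub>\<infinity>n. X (commD W (delta n)) n)"
  by (simp add: omega_def trc_def entry_def)

lemma omega_summand:
  assumes "X \<in> gset" "(\<lambda>m. dd W m n) \<in> ell2"
  shows "X (commD W (delta n)) n = (\<Sum>\<^sub>\<infinity>m. entry X n m * dd W m n)"
  using apply_expand[of X "\<lambda>m. dd W m n" n] assms gset_D[OF assms(1)]
  by (simp add: commD_delta)

lemma omega_formula:
  assumes "X \<in> gset" "\<And>n. (\<lambda>m. dd W m n) \<in> ell2"
  shows "omega X W = (\<Sum>\<^sub>\<infinity>n. \<Sum>\<^sub>\<infinity>m. entry X n m * dd W m n)"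
  unfolding omega_def2 using omega_summand[OF assms(1) assms(2)] by simp

lemma pair_abs:
  "cmod (entry X n m * dd Y m n) \<le> cmod (dd X n m) * cmod (dd Y m n)"
proof (cases "n = m")
  case True then show ?thesis by simp
next
  case False
  then show ?thesis
    by (simp add: norm_mult) (intro mult_right_mono offdiag_le, auto)
qed

definition hsv :: "op \<Rightarrow> real" where
  "hsv X = sqrt (\<Sum>\<^sub>\<infinity>p. (cmod (dd X (fst p) (snd p)))\<^sup>2)"

lemma HS': "X \<in> gset \<Longrightarrow> (\<lambda>p. (cmod (dd X (fst p) (snd p)))\<^sup>2) summable_on UNIV"
  using HS by (simp add: case_prod_unfold)
lemma HS_swap': "X \<in> gset \<Longrightarrow> (\<lambda>p. (cmod (dd X (snd p) (fst p)))\<^sup>2) summable_on UNIV"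
  using HS_swap by (simp add: case_prod_unfold)

lemma hsv_swap: assumes "X \<in> gset"
  shows "(\<Sum>\<^sub>\<infinity>p. (cmod (dd X (snd p) (fst p)))\<^sup>2) = (\<Sum>\<^sub>\<infinity>p. (cmod (dd X (fst p) (snd p)))\<^sup>2)"
proof -
  have "(\<Sum>\<^sub>\<infinity>p. (cmod (dd X (snd p) (fst p)))\<^sup>2) = (\<Sum>\<^sub>\<infinity>p\<in>prod.swap ` UNIV. (cmod (dd X (fst p) (snd p)))\<^sup>2)"
    by (subst infsum_reindex) (auto simp: o_def)
  then show ?thesis by simp
qed

lemma pair_prod_summable:
  assumes "X \<in> gset" "Y \<in> gset"
  shows "(\<lambda>p. cmod (dd X (fst p) (snd p)) * cmod (dd Y (snd p) (fst p))) summable_on UNIV"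
  using am_gm_summable[OF HS'[OF assms(1)] HS_swap'[OF assms(2)]] by (simp add: abs_mult)

lemma pair_prod_bound:
  assumes "X \<in> gset" "Y \<in> gset"
  shows "(\<Sum>\<^sub>\<infinity>p. cmod (dd X (fst p) (snd p)) * cmod (dd Y (snd p) (fst p))) \<le> hsv X * hsv Y"
  using cauchy_schwarz_infsum[OF HS'[OF assms(1)] HS_swap'[OF assms(2)]]
  by (simp add: hsv_def hsv_swap[OF assms(2)])

lemma pair_summable:
  assumes "X \<in> gset" "Y \<in> gset"
  shows "(\<lambda>(n,m). entry X n m * dd Y m n) summable_on UNIV"
proof -
  have "(\<lambda>p. norm (entry X (fst p) (snd p) * dd Y (snd p) (fst p))) summable_on UNIV"
    by (rule summable_on_comparison_test[OF pair_prod_summable[OF assms]]) (simp_all add: pair_abs)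
  then have "(\<lambda>p. entry X (fst p) (snd p) * dd Y (snd p) (fst p)) summable_on UNIV"
    by (simp add: summable_on_iff_abs_summable_on_complex)
  then show ?thesis by (simp add: case_prod_unfold)
qed

lemma omega_pair:
  assumes "X \<in> gset" "Y \<in> gset"
  shows "omega X Y = (\<Sum>\<^sub>\<infinity>(n,m). entry X n m * dd Y m n)"
  unfolding omega_formula[OF assms(1) dd_col_ell2[OF assms(2)]]
  using infsum_Sigma'_banach[of "\<lambda>n m. entry X n m * dd Y m n" UNIV "\<lambda>_. UNIV"] pair_summable[OF assms]
  by (simp add: UNIV_Times_UNIV)

lemma omega_bound:
  assumes "X \<in> gset" "Y \<in> gset"
  shows "cmod (omega X Y) \<le> hsv X * hsv Y"
proof -
  have s: "(\<lambda>p. norm (entry X (fst p) (snd p) * dd Y (snd p) (fst p))) summable_on UNIV"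
    by (rule summable_on_comparison_test[OF pair_prod_summable[OF assms]]) (simp_all add: pair_abs)
  have "cmod (omega X Y) = cmod (\<Sum>\<^sub>\<infinity>p. entry X (fst p) (snd p) * dd Y (snd p) (fst p))"
    by (simp add: omega_pair[OF assms] case_prod_unfold)
  also have "\<dots> \<le> (\<Sum>\<^sub>\<infinity>p. cmod (entry X (fst p) (snd p) * dd Y (snd p) (fst p)))"
    by (rule norm_infsum_bound[OF s])
  also have "\<dots> \<le> (\<Sum>\<^sub>\<infinity>p. cmod (dd X (fst p) (snd p)) * cmod (dd Y (snd p) (fst p)))"
    by (rule infsum_mono[OF s pair_prod_summable[OF assms]]) (simp add: pair_abs)
  also have "\<dots> \<le> hsv X * hsv Y" by (rule pair_prod_bound[OF assms])
  finally show ?thesis .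
qed

lemma hs_norm_eq: "hs_norm (commD X) = hsv X"
  by (simp add: hs_norm_def hsv_def entry_commD case_prod_unfold)

lemma hsv_nonneg: "0 \<le> hsv X" by (simp add: hsv_def infsum_nonneg)

lemma gnorm_ge: assumes "X \<in> gset" shows "hsv X \<le> gnorm X" and "cmod (entry X n n) \<le> gnorm X"
proof -
  obtain K where K: "\<And>m n. cmod (entry X m n) \<le> K" using entry_bound gset_D[OF assms] by blast
  have bdd: "bdd_above (range (\<lambda>n. cmod (entry X n n)))" unfolding bdd_above_def using K by auto
  have 1: "cmod (entry X n n) \<le> (SUP n. cmod (entry X n n))" by (rule cSUP_upper[OF _ bdd]) simp
  have "0 \<le> (SUP n. cmod (entry X n n))" by (rule order_trans[OF norm_ge_zero 1])
  with 1 show "hsv X \<le> gnorm X" "cmod (entry X n n) \<le> gnorm X"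
    using hsv_nonneg[of X] by (auto simp: gnorm_def hs_norm_eq)
qed

lemma omega_cont: assumes "X \<in> gset" "Y \<in> gset"
  shows "cmod (omega X Y) \<le> 1 * gnorm X * gnorm Y"
proof -
  have "cmod (omega X Y) \<le> hsv X * hsv Y" by (rule omega_bound[OF assms])
  also have "\<dots> \<le> gnorm X * gnorm Y"
    by (intro mult_mono gnorm_ge assms hsv_nonneg) (use gnorm_ge(1)[OF assms(1)] hsv_nonneg[of X] in linarith)
  finally show ?thesis by simp
qed

lemma omega_skew: assumes "X \<in> gset" "Y \<in> gset" shows "omega Y X = - omega X Y"
proof -
  have "omega Y X = (\<Sum>\<^sub>\<infinity>n. \<Sum>\<^sub>\<infinity>m. entry Y n m * dd X m n)"
    by (rule omega_formula[OF assms(2) dd_col_ell2[OF assms(1)]])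
  also have "\<dots> = (\<Sum>\<^sub>\<infinity>m. \<Sum>\<^sub>\<infinity>n. entry Y n m * dd X m n)"
    by (rule infsum_swap_banach) (use pair_summable[OF assms(2,1)] in \<open>simp add: UNIV_Times_UNIV\<close>)
  also have "\<dots> = (\<Sum>\<^sub>\<infinity>m. \<Sum>\<^sub>\<infinity>n. - (entry X m n * dd Y n m))"
    by (intro infsum_cong) (simp add: dd_def algebra_simps)
  also have "\<dots> = - omega X Y"
    by (simp add: infsum_uminus omega_formula[OF assms(1) dd_col_ell2[OF assms(2)]])
  finally show ?thesis .
qed

lemma omega_summable:
  assumes "X \<in> gset" "Y \<in> gset"
  shows "(\<lambda>n. X (commD Y (delta n)) n) summable_on UNIV"
proof -
  have "(\<lambda>n. \<Sum>\<^sub>\<infinity>m. entry X n m * dd Y m n) summable_on UNIV"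
    using summable_on_Sigma_banach[of "\<lambda>n m. entry X n m * dd Y m n" UNIV "\<lambda>_. UNIV"] pair_summable[OF assms]
    by (simp add: UNIV_Times_UNIV)
  then show ?thesis using omega_summand[OF assms(1) dd_col_ell2[OF assms(2)]] by simp
qed

lemma entry_comb: "entry (op_add (op_scale a X) (op_scale b Y)) m n = of_real a * entry X m n + of_real b * entry Y m n"
  by (simp add: entry_def op_add_def op_scale_def)

lemma dd_comb: "dd (op_add (op_scale a X) (op_scale b Y)) m n = of_real a * dd X m n + of_real b * dd Y m n"
  by (simp add: dd_def entry_comb algebra_simps)

lemma omega_lin1:
  assumes "X \<in> gset" "Y \<in> gset" "Z \<in> gset"
  shows "omega (op_add (op_scale a X) (op_scale b Y)) Z = of_real a * omega X Z + of_real b * omega Y Z"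
proof -
  have "omega (op_add (op_scale a X) (op_scale b Y)) Z =
        (\<Sum>\<^sub>\<infinity>n. of_real a * X (commD Z (delta n)) n + of_real b * Y (commD Z (delta n)) n)"
    by (simp add: omega_def2 op_add_def op_scale_def)
  also have "\<dots> = of_real a * omega X Z + of_real b * omega Y Z"
    by (subst infsum_add) (auto intro!: summable_on_cmult_right omega_summable assms
        simp: infsum_cmult_right' omega_def2)
  finally show ?thesis .
qed

lemma omega_lin2:
  assumes "X \<in> gset" "Y \<in> gset" "Z \<in> gset"
  shows "omega Z (op_add (op_scale a X) (op_scale b Y)) = of_real a * omega Z X + of_real b * omega Z Y"
proof -
  have lin: "linear_on_l2 Z" using gset_D[OF assms(3)] by (simp add: bounded_op_def)
  have Z: "Z (commD (op_add (op_scale a X) (op_scale b Y)) (delta n)) n =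
        of_real a * Z (commD X (delta n)) n + of_real b * Z (commD Y (delta n)) n" for n
  proof -
    have e: "commD (op_add (op_scale a X) (op_scale b Y)) (delta n) =
      (\<lambda>m. (\<lambda>m. of_real a * dd X m n) m + (\<lambda>m. of_real b * dd Y m n) m)"
      by (simp add: commD_delta dd_comb)
    have u: "(\<lambda>m. of_real a * dd X m n) \<in> ell2" "(\<lambda>m. of_real b * dd Y m n) \<in> ell2"
      by (intro ell2_scale dd_col_ell2 assms)+
    have "Z (commD (op_add (op_scale a X) (op_scale b Y)) (delta n)) =
         (\<lambda>m. Z (\<lambda>m. of_real a * dd X m n) m + Z (\<lambda>m. of_real b * dd Y m n) m)"
    proof -
      have add: "\<And>x y. x\<in>ell2 \<Longrightarrow> y\<in>ell2 \<Longrightarrow> Z (\<lambda>m. x m + y m) = (\<lambda>m. Z x m + Z y m)"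
        using lin unfolding linear_on_l2_def by blast
      show ?thesis unfolding e by (rule add[OF u])
    qed
    also have "\<dots> = (\<lambda>m. of_real a * Z (\<lambda>m. dd X m n) m + of_real b * Z (\<lambda>m. dd Y m n) m)"
      using lin dd_col_ell2[OF assms(1), of n] dd_col_ell2[OF assms(2), of n]
      unfolding linear_on_l2_def by simp
    finally show ?thesis by (simp add: commD_delta)
  qed
  show ?thesis
    unfolding omega_def2 Z
    by (subst infsum_add) (auto intro!: summable_on_cmult_right omega_summable assms
        simp: infsum_cmult_right')
qed



lemma pair_row:
  fixes f :: "'a \<Rightarrow> 'b \<Rightarrow> real"
  assumes "(\<lambda>(a,b). f a b) summable_on UNIV"
  shows "f a summable_on UNIV" and "(\<lambda>a. \<Sum>\<^sub>\<infinity>b. f a b) summable_on UNIV"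
  using summable_on_SigmaD1[of f UNIV "\<lambda>_. UNIV" a] summable_on_Sigma_banach[of f UNIV "\<lambda>_. UNIV"] assms
  by (simp_all add: UNIV_Times_UNIV)

lemma pair_swap:
  fixes f :: "'a \<Rightarrow> 'b \<Rightarrow> real"
  assumes "(\<lambda>(a,b). f a b) summable_on UNIV"
  shows "(\<lambda>(b,a). f a b) summable_on UNIV"
proof -
  have "(\<lambda>(x,y). (\<lambda>(a,b). f a b) (y,x)) summable_on UNIV \<times> UNIV"
    by (rule summable_on_swap[THEN iffD1]) (simp add: UNIV_Times_UNIV assms)
  then show ?thesis by (simp add: UNIV_Times_UNIV)
qed

lemma sigma_nonneg_summable:
  fixes f :: "'a \<Rightarrow> 'b \<Rightarrow> real"
  assumes nn: "\<And>x y. 0 \<le> f x y" and r: "\<And>x. f x summable_on UNIV"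
    and o: "(\<lambda>x. \<Sum>\<^sub>\<infinity>y. f x y) summable_on UNIV"
  shows "(\<lambda>(x,y). f x y) summable_on UNIV"
proof -
  have e1: "(\<lambda>x. norm (infsum (f x) UNIV)) = (\<lambda>x. infsum (f x) UNIV)"
    using nn by (simp add: infsum_nonneg)
  have e2: "(\<lambda>y. norm (f x y)) = f x" for x using nn by simp
  have e3: "(\<lambda>y. norm ((\<lambda>(x,y). f x y) (x,y))) = f x" for x using nn by simp
  have "(\<lambda>p. norm ((\<lambda>(x,y). f x y) p)) summable_on Sigma UNIV (\<lambda>_. UNIV)"
    apply (rule Infinite_Sum.abs_summable_on_Sigma_iff[THEN iffD2])
    unfolding e3 e1 using r o by simp
  then have "(\<lambda>(x,y). f x y) summable_on Sigma UNIV (\<lambda>_. UNIV)" by (rule abs_summable_summable)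
  then show ?thesis by (simp add: UNIV_Times_UNIV)
qed

lemma bounded_summable:
  fixes f g :: "'a \<Rightarrow> real"
  assumes "g summable_on UNIV" "\<And>x. 0 \<le> f x" "\<And>x. f x \<le> g x"
  shows "f summable_on UNIV"
  using summable_on_comparison_test[of g UNIV f] assms by auto

lemma diag_summable:
  fixes g :: "'a \<Rightarrow> 'a \<Rightarrow> real"
  assumes "(\<lambda>(a,b). g a b) summable_on UNIV"
  shows "(\<lambda>(a,b,c). if c = b then g a b else 0) summable_on UNIV"
    and "(\<lambda>(a,b,c). if c = a then g a b else 0) summable_on UNIV"
proof -
  let ?h1 = "\<lambda>(a,b). (a,(b,b))" and ?h2 = "\<lambda>(a,b). (a,(b,a))"
  have i1: "inj ?h1" and i2: "inj ?h2" by (auto simp: inj_def)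
  have "((\<lambda>(a,b,c). if c = b then g a b else 0) \<circ> ?h1) summable_on UNIV"
    using assms(1) by (simp add: o_def case_prod_unfold)
  then have "(\<lambda>(a,b,c). if c = b then g a b else 0) summable_on range ?h1"
    using summable_on_reindex[OF i1] by blast
  then show "(\<lambda>(a,b,c). if c = b then g a b else 0) summable_on UNIV"
    by (rule summable_on_cong_neutral[THEN iffD1, rotated -1]) (auto simp: image_iff)
  have "((\<lambda>(a,b,c). if c = a then g a b else 0) \<circ> ?h2) summable_on UNIV"
    using assms(1) by (simp add: o_def case_prod_unfold)
  then have "(\<lambda>(a,b,c). if c = a then g a b else 0) summable_on range ?h2"
    using summable_on_reindex[OF i2] by blast
  then show "(\<lambda>(a,b,c). if c = a then g a b else 0) summable_on UNIV"
    by (rule summable_on_cong_neutral[THEN iffD1, rotated -1]) (auto simp: image_iff)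
qed

lemma triple_summable:
  fixes \<alpha> \<beta> \<gamma> :: "int \<Rightarrow> int \<Rightarrow> real"
  assumes na: "\<And>a b. 0 \<le> \<alpha> a b" and nb: "\<And>a b. 0 \<le> \<beta> a b" and nc: "\<And>a b. 0 \<le> \<gamma> a b"
    and sa: "(\<lambda>(a,b). (\<alpha> a b)\<^sup>2) summable_on UNIV"
    and sb: "(\<lambda>(a,b). (\<beta> a b)\<^sup>2) summable_on UNIV"
    and sc: "(\<lambda>(a,b). (\<gamma> a b)\<^sup>2) summable_on UNIV"
  shows "(\<lambda>(a,b,c). \<alpha> a b * \<beta> b c * \<gamma> c a) summable_on UNIV"
proof -
  define R where "R b = (\<Sum>\<^sub>\<infinity>c. (\<beta> b c)\<^sup>2)" for b
  define S where "S a = (\<Sum>\<^sub>\<infinity>c. (\<gamma> c a)\<^sup>2)" for a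
  define \<rho> where "\<rho> a = (\<Sum>\<^sub>\<infinity>b. (\<alpha> a b)\<^sup>2)" for a
  have brow: "(\<lambda>c. (\<beta> b c)\<^sup>2) summable_on UNIV" for b using pair_row(1)[OF sb] .
  have Rs: "R summable_on UNIV" unfolding R_def using pair_row(2)[OF sb] .
  have sc': "(\<lambda>(a,c). (\<gamma> c a)\<^sup>2) summable_on UNIV" using pair_swap[of "\<lambda>c a. (\<gamma> c a)\<^sup>2"] sc by simp
  have gcol: "(\<lambda>c. (\<gamma> c a)\<^sup>2) summable_on UNIV" for a using pair_row(1)[OF sc'] .
  have Ss: "S summable_on UNIV" unfolding S_def using pair_row(2)[OF sc'] .
  have arow: "(\<lambda>b. (\<alpha> a b)\<^sup>2) summable_on UNIV" for a using pair_row(1)[OF sa] .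
  have \<rho>s: "\<rho> summable_on UNIV" unfolding \<rho>_def using pair_row(2)[OF sa] .
  have Rn: "0 \<le> R b" for b unfolding R_def by (simp add: infsum_nonneg)
  have Sn: "0 \<le> S a" for a unfolding S_def by (simp add: infsum_nonneg)
  have \<rho>n: "0 \<le> \<rho> a" for a unfolding \<rho>_def by (simp add: infsum_nonneg)
  have inner_s: "(\<lambda>c. \<beta> b c * \<gamma> c a) summable_on UNIV" for a b
    using am_gm_summable[OF brow gcol] nb nc by (simp add: abs_mult)
  have inner_b: "(\<Sum>\<^sub>\<infinity>c. \<beta> b c * \<gamma> c a) \<le> sqrt (R b) * sqrt (S a)" for a b
    unfolding R_def S_def by (rule cauchy_schwarz_infsum[OF brow gcol nb nc])
  have aR: "(\<lambda>b. \<alpha> a b * sqrt (R b)) summable_on UNIV" for a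
    using am_gm_summable[of "\<alpha> a" UNIV "\<lambda>b. sqrt (R b)"] arow Rs Rn na by (simp add: abs_mult)
  have aR_b: "(\<Sum>\<^sub>\<infinity>b. \<alpha> a b * sqrt (R b)) \<le> sqrt (\<rho> a) * sqrt (infsum R UNIV)" for a
    using cauchy_schwarz_infsum[of "\<alpha> a" UNIV "\<lambda>b. sqrt (R b)"] arow Rs Rn na
    by (simp add: \<rho>_def)
  have Srho: "(\<lambda>a. sqrt (S a) * sqrt (\<rho> a)) summable_on UNIV"
    using am_gm_summable[of "\<lambda>a. sqrt (S a)" UNIV "\<lambda>a. sqrt (\<rho> a)"] Ss \<rho>s Sn \<rho>n by (simp add: abs_mult)
  define F where "F a = (\<lambda>(b,c). \<alpha> a b * \<beta> b c * \<gamma> c a)" for a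
  have Fnn: "0 \<le> F a p" for a p using na nb nc by (auto simp: F_def case_prod_unfold)
  have Fa: "F a summable_on UNIV \<and> infsum (F a) UNIV \<le> sqrt (S a) * (sqrt (\<rho> a) * sqrt (infsum R UNIV))" for a
  proof -
    have r: "(\<lambda>c. \<alpha> a b * \<beta> b c * \<gamma> c a) summable_on UNIV" for b
      using summable_on_cmult_right[OF inner_s[of b a], of "\<alpha> a b"] by (simp add: mult.assoc)
    have isum: "(\<Sum>\<^sub>\<infinity>c. \<alpha> a b * \<beta> b c * \<gamma> c a) = \<alpha> a b * (\<Sum>\<^sub>\<infinity>c. \<beta> b c * \<gamma> c a)" for b
      by (simp add: mult.assoc infsum_cmult_right')
    have ib: "(\<Sum>\<^sub>\<infinity>c. \<alpha> a b * \<beta> b c * \<gamma> c a) \<le> sqrt (S a) * (\<alpha> a b * sqrt (R b))" for b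
      unfolding isum using mult_left_mono[OF inner_b[of b a] na[of a b]] by (simp add: algebra_simps)
    have os: "(\<lambda>b. sqrt (S a) * (\<alpha> a b * sqrt (R b))) summable_on UNIV"
      by (rule summable_on_cmult_right[OF aR])
    have o: "(\<lambda>b. \<Sum>\<^sub>\<infinity>c. \<alpha> a b * \<beta> b c * \<gamma> c a) summable_on UNIV"
      by (rule bounded_summable[OF os _ ib]) (simp add: isum infsum_nonneg na nb nc)
    have Fs: "F a summable_on UNIV"
      unfolding F_def using sigma_nonneg_summable[of "\<lambda>b c. \<alpha> a b * \<beta> b c * \<gamma> c a", OF _ r o] na nb nc
      by simp
    have "infsum (F a) UNIV = (\<Sum>\<^sub>\<infinity>b. \<Sum>\<^sub>\<infinity>c. \<alpha> a b * \<beta> b c * \<gamma> c a)"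
      using infsum_Sigma'_banach[of "\<lambda>b c. \<alpha> a b * \<beta> b c * \<gamma> c a" UNIV "\<lambda>_. UNIV"] Fs
      by (simp add: F_def UNIV_Times_UNIV)
    also have "\<dots> \<le> (\<Sum>\<^sub>\<infinity>b. sqrt (S a) * (\<alpha> a b * sqrt (R b)))"
      by (rule infsum_mono[OF o os ib])
    also have "\<dots> = sqrt (S a) * (\<Sum>\<^sub>\<infinity>b. \<alpha> a b * sqrt (R b))"
      by (simp add: infsum_cmult_right')
    also have "\<dots> \<le> sqrt (S a) * (sqrt (\<rho> a) * sqrt (infsum R UNIV))"
      by (rule mult_left_mono[OF aR_b]) (simp add: Sn)
    finally show ?thesis using Fs by simp
  qed
  have "(\<lambda>(a,p). F a p) summable_on UNIV"
  proof (rule sigma_nonneg_summable[OF Fnn])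
    show "F a summable_on UNIV" for a using Fa by blast
    show "(\<lambda>a. infsum (F a) UNIV) summable_on UNIV"
    proof (rule bounded_summable)
      show "(\<lambda>a. sqrt (S a) * sqrt (\<rho> a) * sqrt (infsum R UNIV)) summable_on UNIV"
        by (rule summable_on_cmult_left[OF Srho])
      show "0 \<le> infsum (F a) UNIV" for a by (simp add: infsum_nonneg Fnn)
      show "infsum (F a) UNIV \<le> sqrt (S a) * sqrt (\<rho> a) * sqrt (infsum R UNIV)" for a
        using Fa[of a] by (simp add: mult.assoc)
    qed
  qed
  then show ?thesis by (simp add: F_def)
qed



lemma tri_pt:
  assumes KB: "\<And>m n. cmod (entry B m n) \<le> KB" and KC: "\<And>m n. cmod (entry C m n) \<le> KC"
  shows "cmod (dd A a b * entry B b c * entry C c a) \<le>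
    (if c = b then KB * (cmod (dd A a b) * cmod (dd C b a)) else 0) +
    (if c = a then KC * (cmod (dd A a b) * cmod (dd B b a)) else 0) +
    cmod (dd A a b) * cmod (dd B b c) * cmod (dd C c a)"
proof -
  have KB0: "0 \<le> KB" using KB[of 0 0] norm_ge_zero order_trans by blast
  have KC0: "0 \<le> KC" using KC[of 0 0] norm_ge_zero order_trans by blast
  have rnn: "0 \<le> (if c = b then KB * (cmod (dd A a b) * cmod (dd C b a)) else 0)"
            "0 \<le> (if c = a then KC * (cmod (dd A a b) * cmod (dd B b a)) else 0)"
            "0 \<le> cmod (dd A a b) * cmod (dd B b c) * cmod (dd C c a)"
    using KB0 KC0 by auto
  have L: "cmod (dd A a b * entry B b c * entry C c a) = cmod (dd A a b) * cmod (entry B b c) * cmod (entry C c a)"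
    by (simp add: norm_mult)
  show ?thesis
  proof (cases "a = b")
    case True then show ?thesis using rnn by simp
  next
    case ab: False
    show ?thesis
    proof (cases "c = b")
      case True
      have h2: "cmod (entry C c a) \<le> cmod (dd C b a)" using True ab offdiag_le[of b a C] by simp
      have "cmod (dd A a b) * cmod (entry B b c) \<le> cmod (dd A a b) * KB" by (rule mult_left_mono[OF KB]) simp
      then have "cmod (dd A a b) * cmod (entry B b c) * cmod (entry C c a) \<le> cmod (dd A a b) * KB * cmod (dd C b a)"
        by (rule mult_mono[OF _ h2]) (use KB0 in auto)
      then show ?thesis using True rnn L by (simp add: algebra_simps)
    next
      case cb: False
      show ?thesis
      proof (cases "c = a")
        case True
        have h1: "cmod (entry B b c) \<le> cmod (dd B b a)" using True ab offdiag_le[of b a B] by simp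
        have "cmod (dd A a b) * cmod (entry B b c) \<le> cmod (dd A a b) * cmod (dd B b a)" by (rule mult_left_mono[OF h1]) simp
        then have "cmod (dd A a b) * cmod (entry B b c) * cmod (entry C c a) \<le> cmod (dd A a b) * cmod (dd B b a) * KC"
          by (rule mult_mono[OF _ KC]) auto
        then show ?thesis using True cb rnn L by (simp add: algebra_simps)
      next
        case False
        have "cmod (dd A a b) * cmod (entry B b c) * cmod (entry C c a) \<le> cmod (dd A a b) * cmod (dd B b c) * cmod (dd C c a)"
        proof -
          have h1: "cmod (entry B b c) \<le> cmod (dd B b c)" using cb offdiag_le[of b c B] by simp
          have h2: "cmod (entry C c a) \<le> cmod (dd C c a)" using False offdiag_le[of c a C] by simp
          have "cmod (dd A a b) * cmod (entry B b c) \<le> cmod (dd A a b) * cmod (dd B b c)" by (rule mult_left_mono[OF h1]) simp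
          then show ?thesis by (rule mult_mono[OF _ h2]) auto
        qed
        then show ?thesis using False cb rnn L by simp
      qed
    qed
  qed
qed

lemma HSp: "X \<in> gset \<Longrightarrow> (\<lambda>(a,b). (cmod (dd X a b))\<^sup>2) summable_on UNIV" by (rule HS)
lemma HSsp: "X \<in> gset \<Longrightarrow> (\<lambda>(a,b). (cmod (dd X b a))\<^sup>2) summable_on UNIV" by (rule HS_swap)

lemma pair_am_gm:
  fixes f g :: "'a \<Rightarrow> 'b \<Rightarrow> real"
  assumes "(\<lambda>(a,b). (f a b)\<^sup>2) summable_on UNIV" "(\<lambda>(a,b). (g a b)\<^sup>2) summable_on UNIV"
    "\<And>a b. 0 \<le> f a b" "\<And>a b. 0 \<le> g a b"
  shows "(\<lambda>(a,b). f a b * g a b) summable_on UNIV"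
  using am_gm_summable[of "\<lambda>p. f (fst p) (snd p)" UNIV "\<lambda>p. g (fst p) (snd p)"] assms
  by (simp add: case_prod_unfold abs_mult)

lemma tri_summable:
  assumes A: "A \<in> gset" and B: "B \<in> gset" and C: "C \<in> gset"
  shows "(\<lambda>(a,b,c). dd A a b * entry B b c * entry C c a) summable_on UNIV"
proof -
  obtain KB where KB: "\<And>m n. cmod (entry B m n) \<le> KB" using entry_bound gset_D[OF B] by blast
  obtain KC where KC: "\<And>m n. cmod (entry C m n) \<le> KC" using entry_bound gset_D[OF C] by blast
  have KB0: "0 \<le> KB" using KB[of 0 0] norm_ge_zero order_trans by blast
  have KC0: "0 \<le> KC" using KC[of 0 0] norm_ge_zero order_trans by blast
  have g1: "(\<lambda>(a,b). KB * (cmod (dd A a b) * cmod (dd C b a))) summable_on UNIV"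
    using summable_on_cmult_right[OF pair_am_gm[OF HSp[OF A] HSsp[OF C]], of KB]
    by (simp add: case_prod_unfold)
  have g2: "(\<lambda>(a,b). KC * (cmod (dd A a b) * cmod (dd B b a))) summable_on UNIV"
    using summable_on_cmult_right[OF pair_am_gm[OF HSp[OF A] HSsp[OF B]], of KC]
    by (simp add: case_prod_unfold)
  have F1: "(\<lambda>(a,b,c). if c = b then KB * (cmod (dd A a b) * cmod (dd C b a)) else 0) summable_on UNIV"
    using diag_summable(1)[OF g1] by simp
  have F2: "(\<lambda>(a,b,c). if c = a then KC * (cmod (dd A a b) * cmod (dd B b a)) else 0) summable_on UNIV"
    using diag_summable(2)[OF g2] by simp
  have F3: "(\<lambda>(a,b,c). cmod (dd A a b) * cmod (dd B b c) * cmod (dd C c a)) summable_on UNIV"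
    by (rule triple_summable[OF _ _ _ HSp[OF A] HSp[OF B] HSp[OF C]]) auto
  have G: "(\<lambda>p. (\<lambda>(a,b,c). if c = b then KB * (cmod (dd A a b) * cmod (dd C b a)) else 0) p +
     (\<lambda>(a,b,c). if c = a then KC * (cmod (dd A a b) * cmod (dd B b a)) else 0) p +
     (\<lambda>(a,b,c). cmod (dd A a b) * cmod (dd B b c) * cmod (dd C c a)) p) summable_on UNIV"
    by (intro summable_on_add F1 F2 F3)
  have "(\<lambda>p. norm ((\<lambda>(a,b,c). dd A a b * entry B b c * entry C c a) p)) summable_on UNIV"
  proof (rule summable_on_comparison_test[OF G])
    fix p :: "int \<times> int \<times> int"
    obtain a b c where p: "p = (a,b,c)" by (cases p) auto
    show "norm ((\<lambda>(a,b,c). dd A a b * entry B b c * entry C c a) p) \<le> (\<lambda>p. (\<lambda>(a,b,c). if c = b then KB * (cmod (dd A a b) * cmod (dd C b a)) else 0) p +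
     (\<lambda>(a,b,c). if c = a then KC * (cmod (dd A a b) * cmod (dd B b a)) else 0) p +
     (\<lambda>(a,b,c). cmod (dd A a b) * cmod (dd B b c) * cmod (dd C c a)) p) p"
      unfolding p using tri_pt[OF KB KC, of A a b c] by simp
  qed auto
  then show ?thesis by (rule abs_summable_summable)
qed

definition PP :: "op \<Rightarrow> op \<Rightarrow> int \<Rightarrow> int \<Rightarrow> complex" where
  "PP A B m n = (\<Sum>\<^sub>\<infinity>k. entry A m k * entry B k n)"

lemma entry_lie:
  assumes "Y \<in> gset" "Z \<in> gset"
  shows "entry (lie Y Z) m n = PP Y Z m n - PP Z Y m n"
proof -
  have "Y (Z (delta n)) m = PP Y Z m n"
    using apply_expand[of Y "Z (delta n)" m] gset_D[OF assms(1)] col_ell2[of Z n] gset_D[OF assms(2)]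
    by (simp add: PP_def entry_def)
  moreover have "Z (Y (delta n)) m = PP Z Y m n"
    using apply_expand[of Z "Y (delta n)" m] gset_D[OF assms(2)] col_ell2[of Y n] gset_D[OF assms(1)]
    by (simp add: PP_def entry_def)
  ultimately show ?thesis by (simp add: entry_def lie_def)
qed

definition Q1 :: "op \<Rightarrow> op \<Rightarrow> int \<Rightarrow> int \<Rightarrow> complex" where
  "Q1 A B m n = (\<Sum>\<^sub>\<infinity>k. dd A m k * entry B k n)"
definition Q2 :: "op \<Rightarrow> op \<Rightarrow> int \<Rightarrow> int \<Rightarrow> complex" where
  "Q2 A B m n = (\<Sum>\<^sub>\<infinity>k. entry A m k * dd B k n)"

lemma ddPP_split:
  assumes A: "A \<in> gset" and B: "B \<in> gset"
  shows "of_int (m - n) * PP A B m n = Q1 A B m n + Q2 A B m n"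
proof -
  have s1: "(\<lambda>k. dd A m k * entry B k n) summable_on UNIV"
    by (rule ell2_prod_summable[OF dd_row_ell2[OF A] col_ell2]) (use gset_D[OF B] in simp)
  have s2: "(\<lambda>k. entry A m k * dd B k n) summable_on UNIV"
    by (rule ell2_prod_summable[OF row_ell2 dd_col_ell2[OF B]]) (use gset_D[OF A] in simp_all)
  have "of_int (m - n) * PP A B m n = (\<Sum>\<^sub>\<infinity>k. of_int (m - n) * (entry A m k * entry B k n))"
    by (simp add: PP_def infsum_cmult_right')
  also have "\<dots> = (\<Sum>\<^sub>\<infinity>k. dd A m k * entry B k n + entry A m k * dd B k n)"
    by (rule infsum_cong) (simp add: dd_def algebra_simps)
  also have "\<dots> = Q1 A B m n + Q2 A B m n"
    unfolding Q1_def Q2_def by (rule infsum_add[OF s1 s2])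
  finally show ?thesis .
qed

lemma Q2_col: assumes A: "A \<in> gset" and B: "B \<in> gset" shows "(\<lambda>m. Q2 A B m n) \<in> ell2"
proof -
  have "(\<lambda>m. Q2 A B m n) = A (\<lambda>k. dd B k n)"
    using apply_expand[of A "\<lambda>k. dd B k n"] gset_D[OF A] dd_col_ell2[OF B] by (auto simp: Q2_def)
  moreover have "A (\<lambda>k. dd B k n) \<in> ell2"
    using gset_D[OF A] dd_col_ell2[OF B] unfolding bounded_op_def by blast
  ultimately show ?thesis by simp
qed

lemma Q1_col: assumes A: "A \<in> gset" and B: "B \<in> gset" shows "(\<lambda>m. Q1 A B m n) \<in> ell2"
proof -
  define R where "R m = (\<Sum>\<^sub>\<infinity>k. (cmod (dd A m k))\<^sup>2)" for m
  define S where "S = (\<Sum>\<^sub>\<infinity>k. (cmod (entry B k n))\<^sup>2)"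
  have bc: "(\<lambda>k. (cmod (entry B k n))\<^sup>2) summable_on UNIV"
    using col_ell2[of B n] gset_D[OF B] by (simp add: ell2_def)
  have bnd: "(cmod (Q1 A B m n))\<^sup>2 \<le> R m * S" for m
  proof -
    have abs: "(\<lambda>k. norm (dd A m k * entry B k n)) summable_on UNIV"
      using ell2_prod_abs_summable[OF dd_row_ell2[OF A] col_ell2[of B n]] gset_D[OF B] by (simp add: norm_mult)
    have "cmod (Q1 A B m n) \<le> (\<Sum>\<^sub>\<infinity>k. norm (dd A m k * entry B k n))"
      unfolding Q1_def by (rule norm_infsum_bound[OF abs])
    also have "\<dots> = (\<Sum>\<^sub>\<infinity>k. cmod (dd A m k) * cmod (entry B k n))" by (simp add: norm_mult)
    also have "\<dots> \<le> sqrt (R m) * sqrt S"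
      unfolding R_def S_def by (rule cauchy_schwarz_infsum[OF HS_row[OF A] bc]) auto
    finally have "cmod (Q1 A B m n) \<le> sqrt (R m) * sqrt S" .
    then have "(cmod (Q1 A B m n))\<^sup>2 \<le> (sqrt (R m) * sqrt S)\<^sup>2" by (rule power_mono) simp
    also have "\<dots> = R m * S"
      by (simp add: power_mult_distrib R_def S_def infsum_nonneg)
    finally show ?thesis .
  qed
  have "(\<lambda>m. R m * S) summable_on UNIV"
    unfolding R_def by (rule summable_on_cmult_left[OF HS_rownorm[OF A]])
  then have "(\<lambda>m. (cmod (Q1 A B m n))\<^sup>2) summable_on UNIV"
    by (rule bounded_summable) (auto intro: bnd)
  then show ?thesis by (simp add: ell2_def)
qed

lemma ell2_diff: "x \<in> ell2 \<Longrightarrow> y \<in> ell2 \<Longrightarrow> (\<lambda>m. x m - y m) \<in> ell2"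
  using ell2_add[of x "\<lambda>m. (-1) * y m"] ell2_scale[of y "-1"] by simp

lemma lie_col:
  assumes Y: "Y \<in> gset" and Z: "Z \<in> gset"
  shows "(\<lambda>m. dd (lie Y Z) m n) \<in> ell2"
proof -
  have e: "(\<lambda>m. dd (lie Y Z) m n) = (\<lambda>m. (\<lambda>m. Q1 Y Z m n + Q2 Y Z m n) m - (\<lambda>m. Q1 Z Y m n + Q2 Z Y m n) m)"
    by (rule ext) (simp only: dd_def entry_lie[OF Y Z] right_diff_distrib ddPP_split[OF Y Z] ddPP_split[OF Z Y])
  show ?thesis unfolding e
    by (intro ell2_diff ell2_add Q1_col Q2_col Y Z)
qed



lemma infsum_diff':
  fixes f g :: "'a \<Rightarrow> complex"
  assumes "f summable_on A" "g summable_on A"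
  shows "(\<Sum>\<^sub>\<infinity>x\<in>A. f x - g x) = infsum f A - infsum g A"
proof -
  have "(\<Sum>\<^sub>\<infinity>x\<in>A. f x - g x) = (\<Sum>\<^sub>\<infinity>x\<in>A. f x + (- g x))" by simp
  also have "\<dots> = infsum f A + (\<Sum>\<^sub>\<infinity>x\<in>A. - g x)"
    by (rule infsum_add[OF assms(1)]) (simp add: summable_on_uminus assms(2))
  finally show ?thesis by (simp add: infsum_uminus)
qed

definition TT :: "op \<Rightarrow> op \<Rightarrow> op \<Rightarrow> complex" where
  "TT A B C = (\<Sum>\<^sub>\<infinity>(a,b,c). dd A a b * entry B b c * entry C c a)"

lemma T_iter:
  assumes A: "A \<in> gset" and B: "B \<in> gset" and C: "C \<in> gset"
  shows "(\<lambda>b. dd A a b * PP B C b a) summable_on UNIV"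
    and "(\<lambda>a. \<Sum>\<^sub>\<infinity>b. dd A a b * PP B C b a) summable_on UNIV"
    and "TT A B C = (\<Sum>\<^sub>\<infinity>a. \<Sum>\<^sub>\<infinity>b. dd A a b * PP B C b a)"
proof -
  define g where "g a = (\<lambda>(b,c). dd A a b * entry B b c * entry C c a)" for a
  have tri: "(\<lambda>(a,p). g a p) summable_on UNIV"
    using tri_summable[OF A B C] by (simp add: g_def)
  have ga: "g a summable_on UNIV" for a
    using summable_on_SigmaD1[of g UNIV "\<lambda>_. UNIV" a] tri by (simp add: UNIV_Times_UNIV)
  have cm: "(\<Sum>\<^sub>\<infinity>c. dd A a b * entry B b c * entry C c a) = dd A a b * PP B C b a" for a b
    by (simp add: PP_def mult.assoc infsum_cmult_right')
  have inner: "(\<lambda>b. dd A a b * PP B C b a) summable_on UNIV \<and> infsum (g a) UNIV = (\<Sum>\<^sub>\<infinity>b. dd A a b * PP B C b a)" for a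
  proof -
    have s: "(\<lambda>(b,c). dd A a b * entry B b c * entry C c a) summable_on Sigma UNIV (\<lambda>_. UNIV)"
      using ga[of a] by (simp add: g_def UNIV_Times_UNIV)
    show ?thesis
      using infsum_Sigma'_banach[OF s] summable_on_Sigma_banach[OF s]
      by (simp add: cm g_def UNIV_Times_UNIV)
  qed
  show "(\<lambda>b. dd A a b * PP B C b a) summable_on UNIV" using inner by blast
  have s: "(\<lambda>(a,p). g a p) summable_on Sigma UNIV (\<lambda>_. UNIV)" using tri by (simp add: UNIV_Times_UNIV)
  show "(\<lambda>a. \<Sum>\<^sub>\<infinity>b. dd A a b * PP B C b a) summable_on UNIV"
    using summable_on_Sigma_banach[OF s] inner by simp
  have "TT A B C = (\<Sum>\<^sub>\<infinity>(a,p). g a p)" by (simp add: TT_def g_def case_prod_unfold)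
  also have "\<dots> = (\<Sum>\<^sub>\<infinity>a. infsum (g a) UNIV)"
    using infsum_Sigma'_banach[OF s] by (simp add: UNIV_Times_UNIV)
  finally show "TT A B C = (\<Sum>\<^sub>\<infinity>a. \<Sum>\<^sub>\<infinity>b. dd A a b * PP B C b a)" using inner by simp
qed

lemma omega_lie:
  assumes X: "X \<in> gset" and Y: "Y \<in> gset" and Z: "Z \<in> gset"
  shows "omega X (lie Y Z) = TT X Z Y - TT X Y Z"
proof -
  have "omega X (lie Y Z) = (\<Sum>\<^sub>\<infinity>n. \<Sum>\<^sub>\<infinity>m. entry X n m * dd (lie Y Z) m n)"
    by (rule omega_formula[OF X lie_col[OF Y Z]])
  also have "\<dots> = (\<Sum>\<^sub>\<infinity>n. \<Sum>\<^sub>\<infinity>m. dd X n m * PP Z Y m n - dd X n m * PP Y Z m n)"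
    by (intro infsum_cong) (simp add: dd_def entry_lie[OF Y Z] algebra_simps)
  also have "\<dots> = (\<Sum>\<^sub>\<infinity>n. (\<Sum>\<^sub>\<infinity>m. dd X n m * PP Z Y m n) - (\<Sum>\<^sub>\<infinity>m. dd X n m * PP Y Z m n))"
    by (intro infsum_cong infsum_diff' T_iter X Y Z)
  also have "\<dots> = TT X Z Y - TT X Y Z"
    by (simp add: infsum_diff' T_iter X Y Z)
  finally show ?thesis .
qed

lemma TT_cyclic:
  assumes X: "X \<in> gset" and Y: "Y \<in> gset" and Z: "Z \<in> gset"
  shows "TT X Y Z + TT Y Z X + TT Z X Y = 0"
proof -
  define h1 where "h1 = (\<lambda>(a::int,b::int,c::int). dd X a b * entry Y b c * entry Z c a)"
  define h2 where "h2 = (\<lambda>(a::int,b::int,c::int). dd Y a b * entry Z b c * entry X c a)"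
  define h3 where "h3 = (\<lambda>(a::int,b::int,c::int). dd Z a b * entry X b c * entry Y c a)"
  define \<sigma> :: "int \<times> int \<times> int \<Rightarrow> int \<times> int \<times> int" where "\<sigma> = (\<lambda>(a,b,c). (b,c,a))"
  define \<tau> :: "int \<times> int \<times> int \<Rightarrow> int \<times> int \<times> int" where "\<tau> = (\<lambda>(a,b,c). (c,a,b))"
  have i\<sigma>: "inj \<sigma>" by (auto simp: inj_def \<sigma>_def)
  have i\<tau>: "inj \<tau>" by (auto simp: inj_def \<tau>_def)
  have r\<sigma>: "range \<sigma> = UNIV" by (auto simp: \<sigma>_def image_iff)
  have r\<tau>: "range \<tau> = UNIV" by (auto simp: \<tau>_def image_iff)
  have s1: "h1 summable_on UNIV" unfolding h1_def by (rule tri_summable[OF X Y Z])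
  have s2: "(h2 \<circ> \<sigma>) summable_on UNIV"
    using summable_on_reindex[OF i\<sigma>, of h2] tri_summable[OF Y Z X] r\<sigma> by (simp add: h2_def)
  have s3: "(h3 \<circ> \<tau>) summable_on UNIV"
    using summable_on_reindex[OF i\<tau>, of h3] tri_summable[OF Z X Y] r\<tau> by (simp add: h3_def)
  have T2: "TT Y Z X = infsum (h2 \<circ> \<sigma>) UNIV"
    using infsum_reindex[OF i\<sigma>, of h2] r\<sigma> by (simp add: TT_def h2_def)
  have T3: "TT Z X Y = infsum (h3 \<circ> \<tau>) UNIV"
    using infsum_reindex[OF i\<tau>, of h3] r\<tau> by (simp add: TT_def h3_def)
  have T1: "TT X Y Z = infsum h1 UNIV" by (simp add: TT_def h1_def)
  have "TT X Y Z + TT Y Z X + TT Z X Y = infsum h1 UNIV + infsum (h2 \<circ> \<sigma>) UNIV + infsum (h3 \<circ> \<tau>) UNIV"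
    unfolding T1 T2 T3 ..
  also have "\<dots> = (\<Sum>\<^sub>\<infinity>p. h1 p + (h2 \<circ> \<sigma>) p) + infsum (h3 \<circ> \<tau>) UNIV"
    by (subst infsum_add[OF s1 s2]) simp
  also have "\<dots> = (\<Sum>\<^sub>\<infinity>p. h1 p + (h2 \<circ> \<sigma>) p + (h3 \<circ> \<tau>) p)"
    by (rule infsum_add[symmetric, OF summable_on_add[OF s1 s2] s3])
  also have "\<dots> = (\<Sum>\<^sub>\<infinity>p::int\<times>int\<times>int. 0)"
  proof (rule infsum_cong)
    fix p :: "int \<times> int \<times> int"
    obtain a b c where p: "p = (a,b,c)" by (cases p) auto
    show "h1 p + (h2 \<circ> \<sigma>) p + (h3 \<circ> \<tau>) p = 0"
      unfolding p by (simp add: h1_def h2_def h3_def \<sigma>_def \<tau>_def dd_def algebra_simps)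
  qed
  finally show ?thesis by simp
qed

lemma cocycle:
  assumes X: "X \<in> gset" and Y: "Y \<in> gset" and Z: "Z \<in> gset"
  shows "omega X (lie Y Z) + omega Y (lie Z X) + omega Z (lie X Y) = 0"
proof -
  have "omega X (lie Y Z) + omega Y (lie Z X) + omega Z (lie X Y) =
      (TT X Z Y + TT Z Y X + TT Y X Z) - (TT X Y Z + TT Y Z X + TT Z X Y)"
    by (simp add: omega_lie X Y Z)
  also have "\<dots> = 0" using TT_cyclic[OF X Y Z] TT_cyclic[OF X Z Y] by simp
  finally show ?thesis .
qed



lemma fin_supp_infsum:
  assumes "finite S" "\<And>m. m \<notin> S \<Longrightarrow> f m = 0"
  shows "infsum f UNIV = sum f S"
proof -
  have "infsum f UNIV = infsum f S" by (rule infsum_cong_neutral) (use assms in auto)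
  then show ?thesis using assms by simp
qed

lemma fin_supp_summable:
  assumes "finite S" "\<And>m. m \<notin> S \<Longrightarrow> f m = 0"
  shows "f summable_on UNIV"
proof -
  have "f summable_on S" using assms by simp
  then show ?thesis
    by (rule summable_on_cong_neutral[THEN iffD1, rotated -1]) (use assms in auto)
qed

lemma delta_apply: "delta b n = (if n = b then 1 else 0)" by (simp add: delta_def)

definition Pop :: "int \<Rightarrow> op" where "Pop n = (\<lambda>x m. if m = n then \<i> * x n else 0)"
definition Xop :: "int \<Rightarrow> op" where
  "Xop n = (\<lambda>x m. (if m = n then x 0 else 0) - (if m = 0 then x n else 0))"
definition Yop :: "int \<Rightarrow> op" where
  "Yop n = (\<lambda>x m. \<i> * ((if m = n then x 0 else 0) + (if m = 0 then x n else 0)))"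

lemma entry_Xop: "entry (Xop n) a b = (if a = n \<and> b = 0 then 1 else 0) - (if a = 0 \<and> b = n then 1 else 0)"
  by (simp add: entry_def Xop_def delta_apply)
lemma entry_Yop: "entry (Yop n) a b = \<i> * ((if a = n \<and> b = 0 then 1 else 0) + (if a = 0 \<and> b = n then 1 else 0))"
  by (simp add: entry_def Yop_def delta_apply)

lemma sq_two_le:
  assumes "x \<in> ell2" "a \<noteq> b"
  shows "(cmod (x a))\<^sup>2 + (cmod (x b))\<^sup>2 \<le> (\<Sum>\<^sub>\<infinity>m. (cmod (x m))\<^sup>2)"
  using finite_sum_le_infsum[of "\<lambda>m. (cmod (x m))\<^sup>2" UNIV "{a,b}"] assms by (simp add: ell2_def)

lemma sq_one_le:
  assumes "x \<in> ell2"
  shows "(cmod (x a))\<^sup>2 \<le> (\<Sum>\<^sub>\<infinity>m. (cmod (x m))\<^sup>2)"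
  using finite_sum_le_infsum[of "\<lambda>m. (cmod (x m))\<^sup>2" UNIV "{a}"] assms by (simp add: ell2_def)

lemma Pop_gset: "Pop n \<in> gset"
proof -
  have lin: "linear_on_l2 (Pop n)" by (simp add: linear_on_l2_def Pop_def fun_eq_iff algebra_simps)
  have l2: "Pop n x \<in> ell2" for x
    unfolding ell2_def Pop_def mem_Collect_eq by (rule fin_supp_summable[of "{n}"]) auto
  have nb: "l2norm (Pop n x) \<le> 1 * l2norm x" if "x \<in> ell2" for x
  proof -
    have "(\<Sum>\<^sub>\<infinity>m. (cmod (Pop n x m))\<^sup>2) = (cmod (x n))\<^sup>2"
      by (subst fin_supp_infsum[of "{n}"]) (auto simp: Pop_def norm_mult)
    then show ?thesis unfolding l2norm_def using real_le_rsqrt[OF sq_one_le[OF that, of n]] by simp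
  qed
  have sk: "skew_adjoint (Pop n)"
    unfolding skew_adjoint_def l2inner_def
  proof (intro ballI)
    fix x y :: vec
    have e1: "(\<Sum>\<^sub>\<infinity>m. cnj (x m) * Pop n y m) = cnj (x n) * \<i> * y n"
      by (subst fin_supp_infsum[of "{n}"]) (auto simp: Pop_def)
    have e2: "(\<Sum>\<^sub>\<infinity>m. cnj (Pop n x m) * y m) = - \<i> * cnj (x n) * y n"
      by (subst fin_supp_infsum[of "{n}"]) (auto simp: Pop_def)
    show "(\<Sum>\<^sub>\<infinity>m. cnj (x m) * Pop n y m) = - (\<Sum>\<^sub>\<infinity>m. cnj (Pop n x m) * y m)"
      unfolding e1 e2 by (simp add: algebra_simps)
  qed
  have dd0: "dd (Pop n) a b = 0" for a b by (simp add: dd_def entry_def Pop_def delta_def)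
  have hs: "hilbert_schmidt_entries (commD (Pop n))"
    by (simp add: hilbert_schmidt_entries_def entry_commD dd0 case_prod_unfold)
  show ?thesis using lin l2 nb sk hs unfolding gset_def bounded_op_def by blast
qed

lemma Pop_gnorm: "gnorm (Pop n) \<le> 1"
proof -
  have dd0: "dd (Pop n) a b = 0" for a b by (simp add: dd_def entry_def Pop_def delta_def)
  have "(SUP m. cmod (entry (Pop n) m m)) \<le> 1"
    by (rule cSUP_least) (auto simp: entry_def Pop_def delta_def)
  moreover have "hs_norm (commD (Pop n)) = 0" by (simp add: hs_norm_def entry_commD dd0 case_prod_unfold)
  ultimately show ?thesis by (simp add: gnorm_def)
qed

lemma Xop_gset: assumes "n \<noteq> 0" shows "Xop n \<in> gset"
proof -
  have lin: "linear_on_l2 (Xop n)" by (simp add: linear_on_l2_def Xop_def fun_eq_iff algebra_simps)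
  have l2: "Xop n x \<in> ell2" for x
    unfolding ell2_def Xop_def mem_Collect_eq by (rule fin_supp_summable[of "{0,n}"]) auto
  have nb: "l2norm (Xop n x) \<le> 1 * l2norm x" if "x \<in> ell2" for x
  proof -
    have "(\<Sum>\<^sub>\<infinity>m. (cmod (Xop n x m))\<^sup>2) = (cmod (x n))\<^sup>2 + (cmod (x 0))\<^sup>2"
      by (subst fin_supp_infsum[of "{0,n}"]) (use assms in \<open>auto simp: Xop_def\<close>)
    then show ?thesis unfolding l2norm_def using sq_two_le[OF that assms] by simp
  qed
  have sk: "skew_adjoint (Xop n)"
    unfolding skew_adjoint_def l2inner_def
  proof (intro ballI)
    fix x y :: vec
    have e1: "(\<Sum>\<^sub>\<infinity>m. cnj (x m) * Xop n y m) = cnj (x n) * y 0 - cnj (x 0) * y n"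
      by (subst fin_supp_infsum[of "{0,n}"]) (use assms in \<open>auto simp: Xop_def algebra_simps\<close>)
    have e2: "(\<Sum>\<^sub>\<infinity>m. cnj (Xop n x m) * y m) = cnj (x 0) * y n - cnj (x n) * y 0"
      by (subst fin_supp_infsum[of "{0,n}"]) (use assms in \<open>auto simp: Xop_def algebra_simps\<close>)
    show "(\<Sum>\<^sub>\<infinity>m. cnj (x m) * Xop n y m) = - (\<Sum>\<^sub>\<infinity>m. cnj (Xop n x m) * y m)"
      unfolding e1 e2 by (simp add: algebra_simps)
  qed
  have hs: "hilbert_schmidt_entries (commD (Xop n))"
    unfolding hilbert_schmidt_entries_def entry_commD
    by (rule fin_supp_summable[of "{(n,0),(0,n)}"]) (auto simp: dd_def entry_Xop split: if_splits)
  show ?thesis using lin l2 nb sk hs unfolding gset_def bounded_op_def by blast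
qed

lemma Yop_gset: assumes "n \<noteq> 0" shows "Yop n \<in> gset"
proof -
  have lin: "linear_on_l2 (Yop n)" by (simp add: linear_on_l2_def Yop_def fun_eq_iff algebra_simps)
  have l2: "Yop n x \<in> ell2" for x
    unfolding ell2_def Yop_def mem_Collect_eq by (rule fin_supp_summable[of "{0,n}"]) auto
  have nb: "l2norm (Yop n x) \<le> 1 * l2norm x" if "x \<in> ell2" for x
  proof -
    have "(\<Sum>\<^sub>\<infinity>m. (cmod (Yop n x m))\<^sup>2) = (cmod (x n))\<^sup>2 + (cmod (x 0))\<^sup>2"
      by (subst fin_supp_infsum[of "{0,n}"]) (use assms in \<open>auto simp: Yop_def norm_mult\<close>)
    then show ?thesis unfolding l2norm_def using sq_two_le[OF that assms] by simp
  qed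
  have sk: "skew_adjoint (Yop n)"
    unfolding skew_adjoint_def l2inner_def
  proof (intro ballI)
    fix x y :: vec
    have e1: "(\<Sum>\<^sub>\<infinity>m. cnj (x m) * Yop n y m) = \<i> * cnj (x n) * y 0 + \<i> * cnj (x 0) * y n"
      by (subst fin_supp_infsum[of "{0,n}"]) (use assms in \<open>auto simp: Yop_def algebra_simps\<close>)
    have e2: "(\<Sum>\<^sub>\<infinity>m. cnj (Yop n x m) * y m) = - \<i> * cnj (x 0) * y n - \<i> * cnj (x n) * y 0"
      by (subst fin_supp_infsum[of "{0,n}"]) (use assms in \<open>auto simp: Yop_def algebra_simps\<close>)
    show "(\<Sum>\<^sub>\<infinity>m. cnj (x m) * Yop n y m) = - (\<Sum>\<^sub>\<infinity>m. cnj (Yop n x m) * y m)"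
      unfolding e1 e2 by (simp add: algebra_simps)
  qed
  have hs: "hilbert_schmidt_entries (commD (Yop n))"
    unfolding hilbert_schmidt_entries_def entry_commD
    by (rule fin_supp_summable[of "{(n,0),(0,n)}"]) (auto simp: dd_def entry_Yop split: if_splits)
  show ?thesis using lin l2 nb sk hs unfolding gset_def bounded_op_def by blast
qed

lemma lie_XY: assumes "n \<noteq> 0"
  shows "lie (Xop n) (Yop n) = op_add (op_scale 2 (Pop n)) (op_scale (-2) (Pop 0))"
  using assms by (auto simp: fun_eq_iff lie_def Xop_def Yop_def Pop_def op_add_def op_scale_def)

lemma omega_XY: assumes "n \<noteq> 0"
  shows "omega (Xop n) (Yop n) = - 2 * of_int n * \<i>"
proof -
  have "omega (Xop n) (Yop n) = (\<Sum>\<^sub>\<infinity>k. Xop n (\<lambda>m. dd (Yop n) m k) k)"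
    by (simp add: omega_def2 commD_delta)
  also have "\<dots> = - 2 * of_int n * \<i>"
    by (subst fin_supp_infsum[of "{0,n}"])
       (use assms in \<open>auto simp: Xop_def Yop_def dd_def entry_def delta_def algebra_simps\<close>)
  finally show ?thesis .
qed



lemma theta_bound:
  assumes "\<forall>X\<in>gset. cmod (\<theta> X) \<le> C * gnorm X"
  shows "cmod (\<theta> (Pop n)) \<le> \<bar>C\<bar>"
proof -
  have g0: "0 \<le> gnorm (Pop n)" using gnorm_ge(1)[OF Pop_gset] hsv_nonneg order_trans by blast
  have g1: "gnorm (Pop n) \<le> 1" by (rule Pop_gnorm)
  have "cmod (\<theta> (Pop n)) \<le> C * gnorm (Pop n)" using assms Pop_gset by blast
  also have "\<dots> \<le> \<bar>C\<bar> * gnorm (Pop n)" by (rule mult_right_mono[OF abs_ge_self g0])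
  also have "\<dots> \<le> \<bar>C\<bar> * 1" by (rule mult_left_mono[OF g1]) simp
  finally show ?thesis by simp
qed

lemma nontrivial:
  "\<not> (\<exists>\<theta> :: op \<Rightarrow> complex.
            (\<forall>X\<in>gset. \<forall>Y\<in>gset. \<forall>a b::real.
               \<theta> (op_add (op_scale a X) (op_scale b Y)) = of_real a * \<theta> X + of_real b * \<theta> Y)
            \<and> (\<exists>C. \<forall>X\<in>gset. cmod (\<theta> X) \<le> C * gnorm X)
            \<and> (\<forall>X\<in>gset. \<forall>Y\<in>gset. omega X Y = \<theta> (lie X Y)))"
proof
  assume "\<exists>\<theta> :: op \<Rightarrow> complex.
            (\<forall>X\<in>gset. \<forall>Y\<in>gset. \<forall>a b::real.
               \<theta> (op_add (op_scale a X) (op_scale b Y)) = of_real a * \<theta> X + of_real b * \<theta> Y)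
            \<and> (\<exists>C. \<forall>X\<in>gset. cmod (\<theta> X) \<le> C * gnorm X)
            \<and> (\<forall>X\<in>gset. \<forall>Y\<in>gset. omega X Y = \<theta> (lie X Y))"
  then obtain \<theta> :: "op \<Rightarrow> complex" and C where
    lin: "\<forall>X\<in>gset. \<forall>Y\<in>gset. \<forall>a b::real.
               \<theta> (op_add (op_scale a X) (op_scale b Y)) = of_real a * \<theta> X + of_real b * \<theta> Y"
    and bd: "\<forall>X\<in>gset. cmod (\<theta> X) \<le> C * gnorm X"
    and om: "\<forall>X\<in>gset. \<forall>Y\<in>gset. omega X Y = \<theta> (lie X Y)" by blast
  define n :: int where "n = \<lceil>2 * \<bar>C\<bar>\<rceil> + 1"
  have nC: "real_of_int n > 2 * \<bar>C\<bar>" unfolding n_def by linarith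
  then have n0: "n \<noteq> 0" by auto
  have "- 2 * of_int n * \<i> = \<theta> (lie (Xop n) (Yop n))"
    using om[rule_format, OF Xop_gset[OF n0] Yop_gset[OF n0]] omega_XY[OF n0] by simp
  also have "\<dots> = of_real 2 * \<theta> (Pop n) + of_real (-2) * \<theta> (Pop 0)"
    unfolding lie_XY[OF n0] by (rule lin[rule_format, OF Pop_gset Pop_gset])
  finally have e: "- 2 * of_int n * \<i> = 2 * (\<theta> (Pop n) - \<theta> (Pop 0))" by (simp add: algebra_simps)
  have "2 * \<bar>real_of_int n\<bar> = cmod (- 2 * of_int n * \<i>)" by (simp add: norm_mult)
  also have "\<dots> = 2 * cmod (\<theta> (Pop n) - \<theta> (Pop 0))" unfolding e norm_mult by simp
  also have "\<dots> \<le> 2 * (cmod (\<theta> (Pop n)) + cmod (\<theta> (Pop 0)))"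
    by (rule mult_left_mono[OF norm_triangle_ineq4]) simp
  also have "\<dots> \<le> 2 * (\<bar>C\<bar> + \<bar>C\<bar>)"
    using theta_bound[OF bd, of n] theta_bound[OF bd, of 0] by simp
  finally have "\<bar>real_of_int n\<bar> \<le> 2 * \<bar>C\<bar>" by simp
  then show False using nC abs_ge_self[of "real_of_int n"] by linarith
qed

theorem lemma2p1:
  shows "(\<forall>X\<in>gset. \<forall>Y\<in>gset. \<forall>Z\<in>gset. \<forall>a b::real.
            omega (op_add (op_scale a X) (op_scale b Y)) Z = of_real a * omega X Z + of_real b * omega Y Z \<and>
            omega Z (op_add (op_scale a X) (op_scale b Y)) = of_real a * omega Z X + of_real b * omega Z Y)
       \<and> (\<exists>C. \<forall>X\<in>gset. \<forall>Y\<in>gset. cmod (omega X Y) \<le> C * gnorm X * gnorm Y)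
       \<and> (\<forall>X\<in>gset. \<forall>Y\<in>gset. omega X Y = - omega Y X)
       \<and> (\<forall>X\<in>gset. \<forall>Y\<in>gset. \<forall>Z\<in>gset.
            omega X (lie Y Z) + omega Y (lie Z X) + omega Z (lie X Y) = 0)
       \<and> \<not> (\<exists>\<theta> :: op \<Rightarrow> complex.
            (\<forall>X\<in>gset. \<forall>Y\<in>gset. \<forall>a b::real.
               \<theta> (op_add (op_scale a X) (op_scale b Y)) = of_real a * \<theta> X + of_real b * \<theta> Y)
            \<and> (\<exists>C. \<forall>X\<in>gset. cmod (\<theta> X) \<le> C * gnorm X)
            \<and> (\<forall>X\<in>gset. \<forall>Y\<in>gset. omega X Y = \<theta> (lie X Y)))"
proof (intro conjI)
  show "\<forall>X\<in>gset. \<forall>Y\<in>gset. \<forall>Z\<in>gset. \<forall>a b::real.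
            omega (op_add (op_scale a X) (op_scale b Y)) Z = of_real a * omega X Z + of_real b * omega Y Z \<and>
            omega Z (op_add (op_scale a X) (op_scale b Y)) = of_real a * omega Z X + of_real b * omega Z Y"
    by (intro ballI allI conjI omega_lin1 omega_lin2)
  show "\<exists>C. \<forall>X\<in>gset. \<forall>Y\<in>gset. cmod (omega X Y) \<le> C * gnorm X * gnorm Y"
    by (rule exI[of _ 1]) (intro ballI omega_cont)
  show "\<forall>X\<in>gset. \<forall>Y\<in>gset. omega X Y = - omega Y X"
    by (intro ballI omega_skew)
  show "\<forall>X\<in>gset. \<forall>Y\<in>gset. \<forall>Z\<in>gset. omega X (lie Y Z) + omega Y (lie Z X) + omega Z (lie X Y) = 0"
    by (intro ballI cocycle)
  show "\<not> (\<exists>\<theta> :: op \<Rightarrow> complex.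
            (\<forall>X\<in>gset. \<forall>Y\<in>gset. \<forall>a b::real.
               \<theta> (op_add (op_scale a X) (op_scale b Y)) = of_real a * \<theta> X + of_real b * \<theta> Y)
            \<and> (\<exists>C. \<forall>X\<in>gset. cmod (\<theta> X) \<le> C * gnorm X)
            \<and> (\<forall>X\<in>gset. \<forall>Y\<in>gset. omega X Y = \<theta> (lie X Y)))"
    by (rule nontrivial)
qed


end
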